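(* Let $(\mathbf a,\mathbf b)$ be a binary GCP of length $N$ of one of the following three kinds: (i) $N=10^\beta$ ($\beta\ge1$), obtained as $(\mathbf e_0,\mathbf f_0)=K_{10}$, $(\mathbf e_i,\mathbf f_i)=\mathrm{Turyn}(K_{10},(\mathbf e_{i-1},\mathbf f_{i-1}))$; set $Z=4N/10+1$; (ii) $N=26^\gamma$ ($\gamma\ge1$), obtained as $(\mathbf e_0,\mathbf f_0)=K_{26}$, $(\mathbf e_i,\mathbf f_i)=\mathrm{Turyn}(K_{26},(\mathbf e_{i-1},\mathbf f_{i-1}))$; set $Z=12N/26+1$; (iii) $N=10^\beta26^\gamma$ ($\beta\ge0$, $\gamma\ge1$), obtained as $(\mathbf e_0,\mathbf f_0)=K_{26}$, $(\mathbf e_i,\mathbf f_i)=\mathrm{Turyn}(\mathcal A_i,(\mathbf e_{i-1},\mathbf f_{i-1}))$ with each $\mathcal A_i\in\{K_{10},K_{26}\}$; set $Z=12N/26+1$. Let $(\mathbf c,\mathbf d)=(\overleftarrow{\mathbf b},-\overleftarrow{\mathbf a})$, $\mathbf e=(\mathbf a\|\mathbf c)$, $\mathbf f=(\mathbf b\|\mathbf d)$, and for $x_0,y_0,x_1,y_1\in\mathbb U_q$ let $\mathbf g=(x_0,e_0,\dots,e_{2N-1},y_0)$, $\mathbf h=(x_1,f_0,\dots,f_{2N-1},y_1)$. If $x_0-\overline{y_1}=0$, $x_1+\overline{y_0}=0$, $x_0=x_1$ and $\overline{y_0}=-\overline{y_1}$, then $(\mathbf g,\mathbf h)$ is a $(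2N+2,Z)$-CZCP.
   Context: $q\ge2$ is an integer and $\mathbb U_q=\{e^{2\pi\sqrt{-1}t/q}:0\le t<q\}$. $\overleftarrow{\mathbf a}$ denotes the reversal of $\mathbf a$; $\|$ denotes concatenation. A binary GCP of length $N$ is a pair of $\pm1$ sequences with $\rho_{\mathbf a}(\tau)+\rho_{\mathbf b}(\tau)=0$ for all $\tau\neq0$. Kernels (with $+=1$, $-=-1$; first row $\mathbf a$, second row $\mathbf b$): $K_{10}=(++-+-+--++,\;++-+++++--)$; $K_{26}=(++++-++--+-+-+--+-+++--+++,\;++++-++--+-+++++-+---++---)$. Turyn's method: for binary GCPs $\mathcal A=(\mathbf a,\mathbf b)$ of length $N$ and $\mathcal B=(\mathbf c,\mathbf d)$ of length $M$, $\mathrm{Turyn}(\mathcal A,\mathcal B)=(\mathbf e,\mathbf f)$ of length $MN$ with $\mathbf e=\mathbf c\otimes\frac{\mathbf a+\mathbf b}2-\overleftarrow{\mathbf d}\otimes\frac{\mathbf b-\mathbf a}2$, $\mathbf f=\mathbf d\otimes\frac{\mathbf a+\mathbf b}2+\overleftarrow{\mathbf c}\otimes\frac{\mathbf b-\mathbf a}2$, where $\mathbf u\otimes\mathbf v=(u_0\mathbf v,u_1\mathbf v,\dots)$. Aperiodic correlation: for complex sequences of length $N$, $\rho_{\mathbf a,\mathbf b}(\tau)=\sum_{k=0}^{N-1-\tau}a_k\overline{b_{k+\tau}}$ for $0\le\tau\le N-1$, $\rho_{\mathbf a,\mathbf b}(\tau)=\sum_{k=0}^{N-1+\tau}a_{k-\tau}\overline{b_k}$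 for $-(N-1)\le\tau\le-1$, $0$ otherwise; $\rho_{\mathbf a}=\rho_{\mathbf a,\mathbf a}$. CZCP: with $\mathcal T_1=\{1,\dots,Z\}$, $\mathcal T_2=\{N-Z,\dots,N-1\}$, a pair of length-$N$ sequences is an $(N,Z)$-CZCP if $\rho_{\mathbf a}(\tau)+\rho_{\mathbf b}(\tau)=0$ for all $|\tau|\in\mathcal T_1\cup\mathcal T_2$ and $\rho_{\mathbf a,\mathbf b}(\tau)+\rho_{\mathbf b,\mathbf a}(\tau)=0$ for all $|\tau|\in\mathcal T_2$. *)

theory Defs
  imports Complex_Main
begin

text \<open>Binary sequences are int lists with entries +1/-1; pairs are (first row, second row).\<close>

definition K10 :: "int list \<times> int list" where
  "K10 = ([1,1,-1,1,-1,1,-1,-1,1,1], [1,1,-1,1,1,1,1,1,-1,-1])"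

definition K26 :: "int list \<times> int list" where
  "K26 = ([1,1,1,1,-1,1,1,-1,-1,1,-1,1,-1,1,-1,-1,1,-1,1,1,1,-1,-1,1,1,1],
          [1,1,1,1,-1,1,1,-1,-1,1,-1,1,1,1,1,1,-1,1,-1,-1,-1,1,1,-1,-1,-1])"

definition kron :: "int list \<Rightarrow> int list \<Rightarrow> int list" where
  "kron u v = concat (map (\<lambda>x. map (\<lambda>y. x * y) v) u)"

definition vadd :: "int list \<Rightarrow> int list \<Rightarrow> int list" where
  "vadd u v = map2 (+) u v"

definition vsub :: "int list \<Rightarrow> int list \<Rightarrow> int list" where
  "vsub u v = map2 (-) u v"

definition vhalf :: "int list \<Rightarrow> int list" where
  "vhalf u = map (\<lambda>x. x div 2) u"

text \<open>Turyn(A,B) with A = (a,b) of length N and B = (c,d) of length M.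
  For +/-1 sequences a+b and b-a have even entries, so div 2 is exact.\<close>
definition turyn :: "int list \<times> int list \<Rightarrow> int list \<times> int list \<Rightarrow> int list \<times> int list" where
  "turyn A B = (let (a, b) = A; (c, d) = B;
                    s = vhalf (vadd a b); t = vhalf (vsub b a) in
     (vsub (kron c s) (kron (rev d) t), vadd (kron d s) (kron (rev c) t)))"

definition turyn_iter :: "int list \<times> int list \<Rightarrow> (int list \<times> int list) list \<Rightarrow> int list \<times> int list" where
  "turyn_iter P0 As = foldl (\<lambda>P A. turyn A P) P0 As"

definition unit_roots :: "nat \<Rightarrow> complex set" where
  "unit_roots q = {cis (2 * pi * real t / real q) | t. t < q}"

definition acorr :: "complex list \<Rightarrow> complex list \<Rightarrow> int \<Rightarrow> complex" where
  "acorr a b \<tau> = (let N = int (length a) in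
     if 0 \<le> \<tau> \<and> \<tau> \<le> N - 1 then
       (\<Sum>k = 0..nat (N - 1 - \<tau>). a ! k * cnj (b ! (k + nat \<tau>)))
     else if -(N - 1) \<le> \<tau> \<and> \<tau> \<le> -1 then
       (\<Sum>k = 0..nat (N - 1 + \<tau>). a ! (k + nat (-\<tau>)) * cnj (b ! k))
     else 0)"

definition czcp :: "complex list \<Rightarrow> complex list \<Rightarrow> nat \<Rightarrow> nat \<Rightarrow> bool" where
  "czcp a b N Z \<longleftrightarrow> length a = N \<and> length b = N \<and>
     (let T1 = {1 .. int Z}; T2 = {int N - int Z .. int N - 1} in
       (\<forall>\<tau>::int. \<bar>\<tau>\<bar> \<in> T1 \<union> T2 \<longrightarrow> acorr a a \<tau> + acorr b b \<tau> = 0) \<and>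
       (\<forall>\<tau>::int. \<bar>\<tau>\<bar> \<in> T2 \<longrightarrow> acorr a b \<tau> + acorr b a \<tau> = 0))"

end

theory Submission imports Defs "HOL-Computational_Algebra.Polynomial" begin

definition gcp :: "int list \<Rightarrow> int list \<Rightarrow> bool" where
 "gcp a b \<longleftrightarrow> length a = length b \<and>
   Poly a * Poly (rev a) + Poly b * Poly (rev b) = monom (2 * int (length a)) (length a - 1)"

definition pre :: "nat \<Rightarrow> int list \<Rightarrow> int list \<Rightarrow> bool" where
 "pre L a b \<longleftrightarrow> length a = length b \<and> L \<le> length a \<and>
   (\<forall>m<L. a!m = b!m \<and> a!(length a - 1 - m) = - b!(length a - 1 - m))"

lemma kron_Nil[simp]: "kron [] s = []" by (simp add: kron_def)
lemma kron_Cons[simp]: "kron (x#c) s = map ((*) x) s @ kron c s" by (simp add: kron_def)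
lemma kron_append: "kron (c1@c2) s = kron c1 s @ kron c2 s" by (simp add: kron_def)
lemma length_kron[simp]: "length (kron c s) = length c * length s" by (induct c) auto
lemma rev_kron: "rev (kron c s) = kron (rev c) (rev s)"
  by (induct c) (simp_all add: kron_append rev_map)
lemma nth_kron: "m < length c \<Longrightarrow> j < length s \<Longrightarrow> kron c s ! (m * length s + j) = c!m * s!j"
proof (induct c arbitrary: m)
  case Nil then show ?case by simp
next
  case (Cons x c)
  show ?case
  proof (cases m)
    case 0 then show ?thesis using Cons by (simp add: nth_append)
  next
    case (Suc m') 
    have "kron (x#c) s ! (m * length s + j) = kron c s ! (m' * length s + j)"
      using Suc by (simp add: nth_append add.assoc)
    then show ?thesis using Cons Suc by simp
  qed
qed

lemma Poly_map2_add: "length u = length v \<Longrightarrow> Poly (map2 (+) u v) = Poly u + Poly v"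
  by (induct u v rule: list_induct2) simp_all
lemma Poly_map2_sub: "length u = length v \<Longrightarrow> Poly (map2 (-) u v) = Poly u - Poly v"
  by (induct u v rule: list_induct2) simp_all
lemma Poly_map_mult: "Poly (map ((*) x) s) = smult x (Poly s)" by (induct s) simp_all
lemma Poly_map_uminus: "Poly (map uminus s) = - Poly (s :: int list)" by (induct s) simp_all

lemma pcompose_monom1: "pcompose (monom (c::int) k) (monom 1 n) = monom c (k*n)"
proof (induct k)
  case 0 then show ?case by (simp add: monom_0)
next
  case (Suc k) then show ?case by (simp add: monom_Suc pcompose_pCons mult_monom add.commute)
qed

lemma Poly_kron: "Poly (kron c s) = pcompose (Poly c) (monom 1 (length s)) * Poly s"
  by (induct c) (simp_all add: Poly_append Poly_map_mult pcompose_pCons algebra_simps)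

lemma Poly_half: "\<forall>x\<in>set w. even x \<Longrightarrow> smult 2 (Poly (map (\<lambda>x. x div 2) w)) = Poly (w::int list)"
  by (induct w) simp_all

lemma smult4_inj: "smult (4::int) p = smult 4 q \<Longrightarrow> p = q"
  by (metis poly_eq_iff coeff_smult mult_cancel_left zero_neq_numeral)

lemma smult2: "smult (2::int) p = p + p"
  by (metis one_add_one smult_add_left smult_1_left)

lemma gcpK10: "gcp (fst K10) (snd K10)"
  unfolding gcp_def K10_def by (simp add: monom_altdef)
lemma gcpK26: "gcp (fst K26) (snd K26)"
  unfolding gcp_def K26_def by (simp add: monom_altdef)

lemma rev_map2: "length u = length v \<Longrightarrow> rev (map2 f u v) = map2 f (rev u) (rev v)"
  by (simp add: zip_rev rev_map)

lemma turyn_gcp: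
  assumes K: "gcp ka kb" "length ka = n" "n \<ge> 1"
    "\<forall>x\<in>set (vadd ka kb). even x" "\<forall>x\<in>set (vsub kb ka). even x"
  and P: "gcp c d" "length c = M" "M \<ge> 1"
  shows "gcp (fst (turyn (ka,kb) (c,d))) (snd (turyn (ka,kb) (c,d)))
     \<and> length (fst (turyn (ka,kb) (c,d))) = M * n"
proof -
  define s where "s = vhalf (vadd ka kb)"
  define t where "t = vhalf (vsub kb ka)"
  have lkb: "length kb = n" and ld: "length d = M" using K P by (auto simp: gcp_def)
  have ls: "length s = n" "length t = n" using K lkb by (auto simp: s_def t_def vhalf_def vadd_def vsub_def)
  define A where "A = Poly ka" define B where "B = Poly kb"
  define Ar where "Ar = Poly (rev ka)" define Br where "Br = Poly (rev kb)"
  define S where "S = Poly s" define T where "T = Poly t"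
  define Sr where "Sr = Poly (rev s)" define Tr where "Tr = Poly (rev t)"
  have hS: "smult 2 S = A + B" unfolding S_def A_def B_def s_def vhalf_def
    using Poly_half[OF K(4)] by (simp add: vadd_def Poly_map2_add K(2) lkb)
  have hT: "smult 2 T = B - A" unfolding T_def A_def B_def t_def vhalf_def
    using Poly_half[OF K(5)] by (simp add: vsub_def Poly_map2_sub K(2) lkb)
  have rv1: "rev (vadd ka kb) = vadd (rev ka) (rev kb)" unfolding vadd_def using K(2) lkb by (simp add: rev_map2)
  have rv2: "rev (vsub kb ka) = vsub (rev kb) (rev ka)" unfolding vsub_def using K(2) lkb by (simp add: rev_map2)
  have hSr: "smult 2 Sr = Ar + Br"
  proof -
    have "Sr = Poly (map (\<lambda>x. x div 2) (rev (vadd ka kb)))" unfolding Sr_def s_def vhalf_def by (simp add: rev_map)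
    then have "smult 2 Sr = Poly (rev (vadd ka kb))" using Poly_half[of "rev (vadd ka kb)"] K(4) by simp
    then show ?thesis unfolding rv1 Ar_def Br_def using K(2) lkb by (simp add: vadd_def Poly_map2_add)
  qed
  have hTr: "smult 2 Tr = Br - Ar"
  proof -
    have "Tr = Poly (map (\<lambda>x. x div 2) (rev (vsub kb ka)))" unfolding Tr_def t_def vhalf_def by (simp add: rev_map)
    then have "smult 2 Tr = Poly (rev (vsub kb ka))" using Poly_half[of "rev (vsub kb ka)"] K(5) by simp
    then show ?thesis unfolding rv2 Ar_def Br_def using K(2) lkb by (simp add: vsub_def Poly_map2_sub)
  qed
  have gk: "A * Ar + B * Br = monom (2 * int n) (n - 1)"
    using K unfolding gcp_def A_def B_def Ar_def Br_def by simp
  have "smult 4 (S * Sr + T * Tr) = smult 2 S * smult 2 Sr + smult 2 T * smult 2 Tr"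
    by (simp add: smult_add_right)
  also have "\<dots> = (A * Ar + B * Br) + (A * Ar + B * Br)" unfolding hS hT hSr hTr
    by algebra
  also have "\<dots> = smult 2 (A * Ar + B * Br)" by (rule smult2[symmetric])
  also have "\<dots> = smult 4 (monom (int n) (n - 1))" unfolding gk by (simp add: smult_monom)
  finally have gst: "S * Sr + T * Tr = monom (int n) (n - 1)" by (rule smult4_inj)
  define C where "C = pcompose (Poly c) (monom 1 n)"
  define D where "D = pcompose (Poly d) (monom 1 n)"
  define Cr where "Cr = pcompose (Poly (rev c)) (monom 1 n)"
  define Dr where "Dr = pcompose (Poly (rev d)) (monom 1 n)"
  have gcd: "C * Cr + D * Dr = monom (2 * int M) ((M - 1) * n)"
  proof -
    have "C * Cr + D * Dr = pcompose (Poly c * Poly (rev c) + Poly d * Poly (rev d)) (monom 1 n)"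
      unfolding C_def D_def Cr_def Dr_def by (simp add: pcompose_add pcompose_mult)
    also have "\<dots> = monom (2 * int M) ((M - 1) * n)" using P by (simp add: gcp_def pcompose_monom1)
    finally show ?thesis .
  qed
  define e where "e = vsub (kron c s) (kron (rev d) t)"
  define f where "f = vadd (kron d s) (kron (rev c) t)"
  have tur: "turyn (ka,kb) (c,d) = (e,f)" by (simp add: turyn_def Let_def e_def f_def s_def t_def)
  have le: "length e = M * n" "length f = M * n" using ls P ld by (simp_all add: e_def f_def vsub_def vadd_def)
  have E: "Poly e = C * S - Dr * T" unfolding e_def vsub_def C_def S_def Dr_def T_def
    using ls ld P by (simp add: Poly_map2_sub Poly_kron)
  have Er: "Poly (rev e) = Cr * Sr - D * Tr" unfolding e_def vsub_def Cr_def Sr_def D_def Tr_def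
    using ls ld P by (simp add: rev_map2 rev_kron Poly_map2_sub Poly_kron)
  have F: "Poly f = D * S + Cr * T" unfolding f_def vadd_def Cr_def S_def D_def T_def
    using ls ld P by (simp add: Poly_map2_add Poly_kron)
  have Fr: "Poly (rev f) = Dr * Sr + C * Tr" unfolding f_def vadd_def C_def Sr_def Dr_def Tr_def
    using ls ld P by (simp add: rev_map2 rev_kron Poly_map2_add Poly_kron)
  have "Poly e * Poly (rev e) + Poly f * Poly (rev f) = (C * Cr + D * Dr) * (S * Sr + T * Tr)"
    unfolding E Er F Fr by algebra
  also have "\<dots> = monom (2 * int (M * n)) (M * n - 1)" unfolding gcd gst mult_monom
  proof -
    have "(M - 1) * n + (n - 1) = M * n - 1" using K P
      by (metis (no_types, lifting) Nat.add_diff_assoc One_nat_def add.commute diff_mult_distrib le_add_diff_inverse2 mult.commute mult_le_mono1 nat_mult_1)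
    then show "monom (2 * int M * int n) ((M - 1) * n + (n - 1)) = monom (2 * int (M * n)) (M * n - 1)"
      by simp
  qed
  finally show ?thesis unfolding tur using le by (simp add: gcp_def)
qed


lemma idx_arith: "m < (M::nat) \<Longrightarrow> j < n \<Longrightarrow> M * n - 1 - (m * n + j) = (M - 1 - m) * n + (n - 1 - j)"
proof -
  assume a: "m < M" "j < n"
  then obtain r where M: "M = Suc (m + r)" by (metis less_imp_Suc_add)
  have "M * n = m * n + n + r * n" unfolding M by (simp add: algebra_simps)
  then show ?thesis using a M by simp
qed

lemma idx_lt: "m < (M::nat) \<Longrightarrow> j < n \<Longrightarrow> m * n + j < M * n"
proof -
  assume a: "m < M" "j < n"
  then have "m * n + j < m * n + n" by simp
  also have "\<dots> = Suc m * n" by simp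
  also have "\<dots> \<le> M * n" using a by (intro mult_le_mono1) simp
  finally show ?thesis .
qed

lemma turyn_pre:
  assumes K: "length ka = n" "length kb = n" "n \<ge> 1"
    and P: "pre L c d" "length c = M"
  shows "pre (L*n) (fst (turyn (ka,kb) (c,d))) (snd (turyn (ka,kb) (c,d)))"
proof -
  define s where "s = vhalf (vadd ka kb)"
  define t where "t = vhalf (vsub kb ka)"
  have ld: "length d = M" and LM: "L \<le> M" using P by (auto simp: pre_def)
  have ls: "length s = n" "length t = n" using K by (auto simp: s_def t_def vhalf_def vadd_def vsub_def)
  define e where "e = vsub (kron c s) (kron (rev d) t)"
  define f where "f = vadd (kron d s) (kron (rev c) t)"
  have tur: "turyn (ka,kb) (c,d) = (e,f)" by (simp add: turyn_def Let_def e_def f_def s_def t_def)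
  have le: "length e = M * n" "length f = M * n" using ls P ld by (simp_all add: e_def f_def vsub_def vadd_def)
  have ei: "e!(m*n+j) = c!m * s!j - d!(M-1-m) * t!j" if "m < M" "j < n" for m j
  proof -
    have i: "m*n+j < M*n" using idx_lt that .
    have "e!(m*n+j) = kron c s ! (m*n+j) - kron (rev d) t ! (m*n+j)"
      using i ls ld P by (simp add: e_def vsub_def)
    also have "\<dots> = c!m * s!j - d!(M-1-m) * t!j"
      using nth_kron[of m c j s] nth_kron[of m "rev d" j t] that ls ld P by (simp add: rev_nth)
    finally show ?thesis .
  qed
  have fi: "f!(m*n+j) = d!m * s!j + c!(M-1-m) * t!j" if "m < M" "j < n" for m j
  proof -
    have i: "m*n+j < M*n" using idx_lt that .
    have "f!(m*n+j) = kron d s ! (m*n+j) + kron (rev c) t ! (m*n+j)"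
      using i ls ld P by (simp add: f_def vadd_def)
    also have "\<dots> = d!m * s!j + c!(M-1-m) * t!j"
      using nth_kron[of m d j s] nth_kron[of m "rev c" j t] that ls ld P by (simp add: rev_nth)
    finally show ?thesis .
  qed
  have main: "e!i = f!i \<and> e!(length e - 1 - i) = - f!(length e - 1 - i)" if "i < L*n" for i
  proof -
    define m where "m = i div n"
    define j where "j = i mod n"
    have ij: "i = m*n + j" unfolding m_def j_def by simp
    have mL: "m < L" unfolding m_def using that
      by (metis less_mult_imp_div_less)
    have jn: "j < n" unfolding j_def using K by simp
    have mM: "m < M" using mL LM by simp
    have pm: "c!m = d!m" "c!(M-1-m) = - d!(M-1-m)" using P mL by (auto simp: pre_def)
    have a1: "e!i = f!i" unfolding ij using ei[OF mM jn] fi[OF mM jn] pm by simp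
    have m2: "M - 1 - m < M" using mM by simp
    have j2: "n - 1 - j < n" using jn by simp
    have mm: "M - 1 - (M - 1 - m) = m" using mM by simp
    have "length e - 1 - i = (M - 1 - m) * n + (n - 1 - j)" unfolding le ij using idx_arith[OF mM jn] .
    then have a2: "e!(length e - 1 - i) = - f!(length e - 1 - i)"
      using ei[OF m2 j2] fi[OF m2 j2] pm mm by (simp add: algebra_simps)
    show ?thesis using a1 a2 by simp
  qed
  show ?thesis unfolding tur pre_def using main le LM by simp
qed


lemma kernel: "K \<in> {K10, K26} \<Longrightarrow> gcp (fst K) (snd K) \<and> length (fst K) \<ge> 1 \<and>
   (\<forall>x\<in>set (vadd (fst K) (snd K)). even x) \<and> (\<forall>x\<in>set (vsub (snd K) (fst K)). even x)"
  using gcpK10 gcpK26 by (auto simp: K10_def K26_def vadd_def vsub_def)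

lemma iter:
  assumes "set As \<subseteq> {K10, K26}" "gcp a0 b0" "length a0 = n0" "n0 \<ge> 1" "pre L0 a0 b0"
  shows "\<exists>P. P \<ge> 1 \<and> length (fst (turyn_iter (a0,b0) As)) = n0 * P \<and>
     gcp (fst (turyn_iter (a0,b0) As)) (snd (turyn_iter (a0,b0) As)) \<and>
     pre (L0 * P) (fst (turyn_iter (a0,b0) As)) (snd (turyn_iter (a0,b0) As)) \<and>
     (\<forall>K. As = replicate (length As) K \<longrightarrow> P = length (fst K) ^ length As)"
  using assms(1)
proof (induct As rule: rev_induct)
  case Nil then show ?case using assms by (auto simp: turyn_iter_def intro!: exI[of _ 1])
next
  case (snoc A As)
  then obtain P where IH: "P \<ge> 1" "length (fst (turyn_iter (a0,b0) As)) = n0 * P"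
     "gcp (fst (turyn_iter (a0,b0) As)) (snd (turyn_iter (a0,b0) As))"
     "pre (L0 * P) (fst (turyn_iter (a0,b0) As)) (snd (turyn_iter (a0,b0) As))"
     "\<forall>K. As = replicate (length As) K \<longrightarrow> P = length (fst K) ^ length As" by auto
  obtain c d where cd: "turyn_iter (a0,b0) As = (c,d)" by fastforce
  obtain ka kb where A: "A = (ka,kb)" by fastforce
  have kA: "A \<in> {K10,K26}" using snoc by auto
  note k = kernel[OF kA, unfolded A fst_conv snd_conv]
  have ti: "turyn_iter (a0,b0) (As @ [A]) = turyn (ka,kb) (c,d)"
    by (simp add: turyn_iter_def cd[unfolded turyn_iter_def] A)
  have lkb: "length kb = length ka" using k by (simp add: gcp_def)
  have M1: "n0 * P \<ge> 1" using IH assms by simp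
  have g: "gcp (fst (turyn (ka,kb) (c,d))) (snd (turyn (ka,kb) (c,d)))
     \<and> length (fst (turyn (ka,kb) (c,d))) = (n0*P) * length ka"
    using turyn_gcp[of ka kb "length ka" c d "n0*P"] k IH cd M1 by simp
  have p: "pre (L0 * P * length ka) (fst (turyn (ka,kb) (c,d))) (snd (turyn (ka,kb) (c,d)))"
    using turyn_pre[of ka "length ka" kb "L0*P" c d "n0*P"] k IH cd lkb by simp
  have r: "\<forall>K. As @ [A] = replicate (length (As @ [A])) K \<longrightarrow> P * length ka = length (fst K) ^ length (As @ [A])"
  proof (intro allI impI)
    fix K assume h: "As @ [A] = replicate (length (As @ [A])) K"
    then have "As = replicate (length As) K" "A = K"
      by (simp_all add: replicate_append_same[symmetric]) 
    then have "P = length (fst K) ^ length As" "ka = fst K" using IH(5) A by auto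
    then show "P * length ka = length (fst K) ^ length (As @ [A])" by simp
  qed
  show ?case unfolding ti
    apply (rule exI[of _ "P * length ka"])
    using g p r IH k by (simp add: mult.assoc)
qed


definition cor :: "int list \<Rightarrow> int list \<Rightarrow> nat \<Rightarrow> int" where
  "cor u v t = (\<Sum>k<length u - t. u!k * v!(k+t))"

lemma coeff_cor: assumes "t < length u"
  shows "coeff (Poly u * Poly (rev u)) (length u - 1 - t) = cor u u t"
proof -
  have s: "{..length u - 1 - t} = {..<length u - t}" using assms by auto
  show ?thesis unfolding coeff_mult coeff_Poly_eq cor_def s
  proof (rule sum.cong[OF refl])
    fix i assume "i \<in> {..<length u - t}"
    then have i: "i < length u - t" by simp
    then have "length u - 1 - t - i < length u" "i < length u" by auto
    moreover have "length u - Suc (length u - 1 - t - i) = i + t" using i by simp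
    ultimately show "nth_default 0 u i * nth_default 0 (rev u) (length u - 1 - t - i) = u ! i * u ! (i + t)"
      by (simp add: nth_default_def rev_nth)
  qed
qed

lemma gcp_cor: assumes "gcp u v" "1 \<le> t" shows "cor u u t + cor v v t = 0"
proof (cases "t < length u")
  case True
  have lv: "length v = length u" using assms by (simp add: gcp_def)
  have ne: "length u - 1 \<noteq> length u - 1 - t" using True assms(2) by arith
  have "coeff (Poly u * Poly (rev u) + Poly v * Poly (rev v)) (length u - 1 - t) = 0"
    using assms ne unfolding gcp_def by (simp only: coeff_monom) simp
  then show ?thesis using coeff_cor[OF True] coeff_cor[of t v] True lv by simp
next
  case False
  then show ?thesis using assms by (simp add: cor_def gcp_def)
qed

lemma gcp_concat: assumes "gcp a b" "length a \<ge> 1"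
  shows "gcp (a @ rev b) (b @ map uminus (rev a))"
proof -
  have lb: "length b = length a" using assms by (simp add: gcp_def)
  define A where "A = Poly a" define B where "B = Poly b"
  define Ar where "Ar = Poly (rev a)" define Br where "Br = Poly (rev b)"
  define X where "X = (monom 1 (length a) :: int poly)"
  have E: "Poly (a @ rev b) = A + X * Br" by (simp add: Poly_append A_def X_def Br_def)
  have Er: "Poly (rev (a @ rev b)) = B + X * Ar" by (simp add: Poly_append B_def X_def Ar_def lb)
  have F: "Poly (b @ map uminus (rev a)) = B - X * Ar"
    by (simp add: Poly_append B_def X_def Ar_def lb Poly_map_uminus)
  have Fr: "Poly (rev (b @ map uminus (rev a))) = - A + X * Br"
    by (simp add: Poly_append A_def X_def Br_def rev_map Poly_map_uminus)
  have g: "A * Ar + B * Br = monom (2 * int (length a)) (length a - 1)"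
    using assms unfolding gcp_def A_def B_def Ar_def Br_def by simp
  have "Poly (a @ rev b) * Poly (rev (a @ rev b)) + Poly (b @ map uminus (rev a)) * Poly (rev (b @ map uminus (rev a)))
     = (X + X) * (A * Ar + B * Br)" unfolding E Er F Fr by algebra
  also have "\<dots> = monom (2 * int (length (a @ rev b))) (length (a @ rev b) - 1)"
    unfolding g X_def add_monom mult_monom using assms lb by simp
  finally show ?thesis using lb by (simp add: gcp_def)
qed

lemma acorr_pos:
  assumes "length u = L" "length v = L" "1 \<le> t" "t \<le> L"
  shows "acorr ([x] @ map of_int u @ [y]) ([x'] @ map of_int v @ [y']) (int t)
     = x * of_int (v!(t-1)) + of_int (u!(L-t)) * cnj y' + of_int (cor u v t)"
proof -
  define g where "g = [x] @ map of_int u @ [y]"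
  define h where "h = [x'] @ map of_int v @ [y']"
  have lg: "length g = L + 2" using assms by (simp add: g_def)
  define F where "F k = g!k * cnj (h!(k+t))" for k
  have nn: "nat (int (length g) - 1 - int t) = Suc (L - t)" using lg assms by simp
  have "acorr g h (int t) = (\<Sum>k\<in>{0..Suc (L-t)}. F k)"
    unfolding acorr_def Let_def F_def using lg assms nn by simp
  also have "{0..Suc (L-t)} = {..<Suc (Suc (L-t))}" by auto
  also have "(\<Sum>k<Suc (Suc (L-t)). F k) = F 0 + (\<Sum>k<L-t. F (Suc k)) + F (Suc (L-t))"
    using sum.lessThan_Suc_shift[of F "L-t"] by simp
  also have "F 0 = x * of_int (v!(t-1))"
  proof -
    have "h!t = of_int (v!(t-1))" using assms unfolding h_def
      by (cases t) (auto simp: nth_append)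
    then show ?thesis unfolding F_def g_def by simp
  qed
  also have "F (Suc (L-t)) = of_int (u!(L-t)) * cnj y'"
  proof -
    have "h!(Suc (L-t) + t) = y'" using assms unfolding h_def by (simp add: nth_append)
    moreover have "g!(Suc (L-t)) = of_int (u!(L-t))" using assms unfolding g_def by (simp add: nth_append)
    ultimately show ?thesis unfolding F_def by simp
  qed
  also have "(\<Sum>k<L-t. F (Suc k)) = of_int (cor u v t)"
    unfolding cor_def of_int_sum
  proof (rule sum.cong)
    show "{..<L - t} = {..<length u - t}" using assms by simp
  next
    fix k assume "k \<in> {..<length u - t}"
    then have k: "k < L - t" using assms by simp
    then have "k < L" "k + t < L" by auto
    then have "g!(Suc k) = of_int (u!k)" "h!(Suc k + t) = of_int (v!(k+t))"
      using assms unfolding g_def h_def by (simp_all add: nth_append)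
    then show "F (Suc k) = of_int (u ! k * v ! (k + t))" unfolding F_def by simp
  qed
  finally show ?thesis unfolding g_def h_def by (simp add: algebra_simps)
qed

lemma acorr_last:
  assumes "length u = L" "length v = L"
  shows "acorr ([x] @ map of_int u @ [y]) ([x'] @ map of_int v @ [y']) (int (L+1)) = x * cnj y'"
proof -
  have a: "nat (int (length ([x] @ map of_int u @ [y])) - 1 - int (L+1)) = 0" using assms by simp
  have b: "nat (int (L+1)) = L + 1" by simp
  show ?thesis unfolding acorr_def Let_def a b using assms by (simp add: nth_append)
qed

lemma acorr_neg:
  assumes "length g = length h" "1 \<le> t" "t < length g"
  shows "acorr g h (- int t) = cnj (acorr h g (int t))"
  using assms by (simp add: acorr_def Let_def algebra_simps)


lemma entries:
  assumes "length a = N" "length b = N"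
  shows "j < N \<Longrightarrow> (a @ rev b)!j = a!j \<and> (b @ map uminus (rev a))!j = b!j \<and>
           (a @ rev b)!(2*N-1-j) = b!j \<and> (b @ map uminus (rev a))!(2*N-1-j) = - a!j"
    and "N \<le> j \<Longrightarrow> j < 2*N \<Longrightarrow> (a @ rev b)!j = b!(2*N-1-j) \<and> (b @ map uminus (rev a))!j = - a!(2*N-1-j)"
  using assms by (auto simp: nth_append rev_nth mult_2)

lemma intfacts:
  assumes ab: "length a = N" "length b = N" "pre (Z-1) a b" "1 \<le> Z" "Z \<le> N"
  and e: "e = a @ rev b" and f: "f = b @ map uminus (rev a)"
  shows "1 \<le> t \<Longrightarrow> t \<le> 2*N \<Longrightarrow> (t \<le> Z \<or> 2*N+2-Z \<le> t) \<Longrightarrow>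
           e!(t-1) + f!(t-1) - e!(2*N-t) + f!(2*N-t) = 0"
    and "2*N+2-Z \<le> t \<Longrightarrow> t \<le> 2*N \<Longrightarrow>
           f!(t-1) + e!(2*N-t) + e!(t-1) - f!(2*N-t) = 0 \<and> cor e f t + cor f e t = 0"
proof -
  have pr: "m < Z - 1 \<Longrightarrow> a!m = b!m" for m using ab(3) by (simp add: pre_def)
  assume t: "1 \<le> t" "t \<le> 2*N" "t \<le> Z \<or> 2*N+2-Z \<le> t"
  show "e!(t-1) + f!(t-1) - e!(2*N-t) + f!(2*N-t) = 0"
  proof (cases "t - 1 < N")
    case True
    have "2*N-t = 2*N-1-(t-1)" using t by simp
    then show ?thesis using entries(1)[OF ab(1,2) True] e f by simp
  next
    case False
    then have "2*N+2-Z \<le> t" using t ab by auto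
    then have j: "2*N-t < Z - 1" "2*N-t < N" using t ab False by auto
    have "2*N-1-(t-1) = 2*N-t" using t by simp
    then show ?thesis using entries(2)[OF ab(1,2), of "t-1"] entries(1)[OF ab(1,2) j(2)] e f False t pr[OF j(1)]
      by simp
  qed
next
  have pr: "m < Z - 1 \<Longrightarrow> a!m = b!m" for m using ab(3) by (simp add: pre_def)
  assume t: "2*N+2-Z \<le> t" "t \<le> 2*N"
  have j: "2*N-t < Z - 1" "2*N-t < N" "\<not> t - 1 < N" "t - 1 < 2*N" using t ab by auto
  have "2*N-1-(t-1) = 2*N-t" using t j by simp
  then have p1: "f!(t-1) + e!(2*N-t) + e!(t-1) - f!(2*N-t) = 0"
    using entries(2)[OF ab(1,2), of "t-1"] entries(1)[OF ab(1,2) j(2)] e f j by simp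
  have le: "length e = 2*N" using e ab by simp
  have "cor e f t + cor f e t = (\<Sum>k<2*N-t. e!k * f!(k+t) + f!k * e!(k+t))"
    unfolding cor_def sum.distrib using e f ab by (simp add: mult_2)
  also have "\<dots> = 0"
  proof (rule sum.neutral, rule ballI)
    fix k assume "k \<in> {..<2*N-t}"
    then have k: "k < 2*N - t" by simp
    then have kN: "k < N" "k < Z - 1" "N \<le> k + t" "k + t < 2*N" "2*N-1-(k+t) < Z - 1" using j t by auto
    have "e!k = a!k" "f!k = b!k" using entries(1)[OF ab(1,2) kN(1)] e f by auto
    moreover have "e!(k+t) = b!(2*N-1-(k+t))" "f!(k+t) = - a!(2*N-1-(k+t))"
      using entries(2)[OF ab(1,2) kN(3,4)] e f by auto
    ultimately show "e!k * f!(k+t) + f!k * e!(k+t) = 0" using pr[OF kN(2)] pr[OF kN(5)] by simp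
  qed
  finally show "f!(t-1) + e!(2*N-t) + e!(t-1) - f!(2*N-t) = 0 \<and> cor e f t + cor f e t = 0"
    using p1 by simp
qed


lemma final:
  fixes a b :: "int list" and x0 y0 x1 y1 :: complex
  assumes G: "gcp a b" and ab: "length a = N" "pre (Z-1) a b" "1 \<le> Z" "Z \<le> N"
    and c1: "x0 - cnj y1 = 0" and c2: "x1 + cnj y0 = 0" and c3: "x0 = x1"
  shows "czcp ([x0] @ map of_int (a @ rev b) @ [y0]) ([x1] @ map of_int (b @ map uminus (rev a)) @ [y1]) (2 * N + 2) Z"
proof -
  define e where "e = a @ rev b"
  define f where "f = b @ map uminus (rev a)"
  define g where "g = [x0] @ map (of_int :: int \<Rightarrow> complex) e @ [y0]"
  define h where "h = [x1] @ map (of_int :: int \<Rightarrow> complex) f @ [y1]"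
  have lb: "length b = N" using G ab by (simp add: gcp_def)
  have le: "length e = 2*N" "length f = 2*N" using ab lb by (simp_all add: e_def f_def)
  have lg: "length g = 2*N+2" "length h = 2*N+2" using le by (simp_all add: g_def h_def)
  have N1: "N \<ge> 1" using ab by simp
  have Gef: "gcp e f" unfolding e_def f_def using gcp_concat[OF G] N1 ab by simp
  have y1: "cnj y1 = x0" using c1 by simp
  have y0: "cnj y0 = - x0" using c2 c3 by (simp add: add_eq_0_iff)
  note IF = intfacts[OF ab(1) lb ab(2,3,4) e_def f_def]
  have autoP: "acorr g g (int t) + acorr h h (int t) = 0"
    if t: "1 \<le> t" "t \<le> 2*N+1" "t \<le> Z \<or> 2*N+2-Z \<le> t" for t
  proof (cases "t = 2*N+1")
    case True
    then show ?thesis using acorr_last[OF le(1) le(1), of x0 y0 x0 y0] acorr_last[OF le(2) le(2), of x1 y1 x1 y1]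
      unfolding g_def h_def using y0 y1 c3 by simp
  next
    case False
    then have t': "t \<le> 2*N" using t by simp
    have "acorr g g (int t) + acorr h h (int t) =
       x0 * of_int (e!(t-1) + f!(t-1) - e!(2*N-t) + f!(2*N-t)) + of_int (cor e e t + cor f f t)"
      unfolding g_def h_def acorr_pos[OF le(1) le(1) t(1) t'] acorr_pos[OF le(2) le(2) t(1) t']
      using y0 y1 c3 by (simp add: algebra_simps)
    also have "\<dots> = 0" using IF(1)[OF t(1) t' t(3)] gcp_cor[OF Gef t(1)] by simp
    finally show ?thesis .
  qed
  have crossP: "acorr g h (int t) + acorr h g (int t) = 0"
    if t: "2*N+2-Z \<le> t" "t \<le> 2*N+1" for t
  proof (cases "t = 2*N+1")
    case True
    then show ?thesis using acorr_last[OF le(1) le(2), of x0 y0 x1 y1] acorr_last[OF le(2) le(1), of x1 y1 x0 y0]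
      unfolding g_def h_def using y0 y1 c3 by simp
  next
    case False
    then have t': "t \<le> 2*N" and t1: "1 \<le> t" using t ab by auto
    have "acorr g h (int t) + acorr h g (int t) =
       x0 * of_int (f!(t-1) + e!(2*N-t) + e!(t-1) - f!(2*N-t)) + of_int (cor e f t + cor f e t)"
      unfolding g_def h_def acorr_pos[OF le(1) le(2) t1 t'] acorr_pos[OF le(2) le(1) t1 t']
      using y0 y1 c3 by (simp add: algebra_simps)
    also have "\<dots> = 0" using IF(2)[OF t(1) t'] by simp
    finally show ?thesis .
  qed
  have auto_all: "acorr g g \<tau> + acorr h h \<tau> = 0"
    if "\<bar>\<tau>\<bar> \<in> {1..int Z} \<union> {int (2*N+2) - int Z .. int (2*N+2) - 1}" for \<tau>
  proof -
    define t where "t = nat \<bar>\<tau>\<bar>"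
    have t: "1 \<le> t" "t \<le> 2*N+1" "t \<le> Z \<or> 2*N+2-Z \<le> t" using that ab unfolding t_def by auto
    show ?thesis
    proof (cases "\<tau> \<ge> 0")
      case True
      then have "\<tau> = int t" unfolding t_def by simp
      then show ?thesis using autoP[OF t] by simp
    next
      case False
      then have tt: "\<tau> = - int t" unfolding t_def by simp
      have "acorr g g \<tau> + acorr h h \<tau> = cnj (acorr g g (int t) + acorr h h (int t))"
        unfolding tt using acorr_neg[of g g t] acorr_neg[of h h t] lg t by simp
      then show ?thesis using autoP[OF t] by simp
    qed
  qed
  have cross_all: "acorr g h \<tau> + acorr h g \<tau> = 0"
    if "\<bar>\<tau>\<bar> \<in> {int (2*N+2) - int Z .. int (2*N+2) - 1}" for \<tau>
  proof -
    define t where "t = nat \<bar>\<tau>\<bar>"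
    have t: "2*N+2-Z \<le> t" "t \<le> 2*N+1" "1 \<le> t" using that ab unfolding t_def by auto
    show ?thesis
    proof (cases "\<tau> \<ge> 0")
      case True
      then have "\<tau> = int t" unfolding t_def by simp
      then show ?thesis using crossP[OF t(1,2)] by simp
    next
      case False
      then have tt: "\<tau> = - int t" unfolding t_def by simp
      have "acorr g h \<tau> + acorr h g \<tau> = cnj (acorr h g (int t) + acorr g h (int t))"
        unfolding tt using acorr_neg[of g h t] acorr_neg[of h g t] lg t by simp
      then show ?thesis using crossP[OF t(1,2)] by (simp add: add.commute)
    qed
  qed
  show ?thesis
    unfolding czcp_def Let_def g_def[symmetric] h_def[symmetric] e_def[symmetric] f_def[symmetric]
    using lg auto_all cross_all by blast
qed


lemma set_replicate_subset: "set (replicate k K) \<subseteq> {K, K'}" by auto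

lemma pre10: "pre 4 (fst K10) (snd K10)" by (simp add: pre_def K10_def eval_nat_numeral All_less_Suc)
lemma pre26: "pre 12 (fst K26) (snd K26)" by (simp add: pre_def K26_def eval_nat_numeral All_less_Suc)

lemma from_iter:
  assumes "set As \<subseteq> {K10, K26}" "K0 \<in> {K10,K26}" "pre L0 (fst K0) (snd K0)"
    "(a, b) = turyn_iter K0 As" "N = length a" "length (fst K0) = n0"
    "Z = L0 * N div n0 + 1" "L0 < n0"
  shows "gcp a b \<and> pre (Z-1) a b \<and> 1 \<le> Z \<and> Z \<le> N"
proof -
  have K0: "K0 = (fst K0, snd K0)" by simp
  note k = kernel[OF assms(2)]
  obtain P where P: "P \<ge> 1" "length (fst (turyn_iter K0 As)) = n0 * P"
     "gcp (fst (turyn_iter K0 As)) (snd (turyn_iter K0 As))"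
     "pre (L0 * P) (fst (turyn_iter K0 As)) (snd (turyn_iter K0 As))"
    using iter[OF assms(1), of "fst K0" "snd K0" n0 L0] k assms(3,6) K0 by auto
  have ab: "fst (turyn_iter K0 As) = a" "snd (turyn_iter K0 As) = b" using assms(4) by (metis fst_conv snd_conv)+
  have n0: "n0 \<ge> 1" using k assms(6) by simp
  have Z: "Z - 1 = L0 * P" using assms(7) assms(5) P(2) ab n0
    by (simp add: mult.left_commute)
  have "L0 * P < n0 * P" using assms(8) P(1) by simp
  then have "Suc (L0 * P) \<le> n0 * P" by linarith
  then show ?thesis using P ab Z assms(5,7) by auto
qed

theorem theorem3:
  fixes a b :: "int list" and N Z q :: nat and x0 y0 x1 y1 :: complex
  assumes kind:
    "(\<exists>k. (a, b) = turyn_iter K10 (replicate k K10) \<and> Z = 4 * N div 10 + 1) \<or>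
     (\<exists>k. (a, b) = turyn_iter K26 (replicate k K26) \<and> Z = 12 * N div 26 + 1) \<or>
     (\<exists>As. set As \<subseteq> {K10, K26} \<and> (a, b) = turyn_iter K26 As \<and> Z = 12 * N div 26 + 1)"
    and len: "N = length a"
    and q: "q \<ge> 2"
    and U: "x0 \<in> unit_roots q" "y0 \<in> unit_roots q" "x1 \<in> unit_roots q" "y1 \<in> unit_roots q"
    and c1: "x0 - cnj y1 = 0" and c2: "x1 + cnj y0 = 0" and c3: "x0 = x1"
    and c4: "cnj y0 = - cnj y1"
  shows "let c = rev b; d = map uminus (rev a); e = a @ c; f = b @ d;
             g = [x0] @ map of_int e @ [y0]; h = [x1] @ map of_int f @ [y1]
         in czcp g h (2 * N + 2) Z"
proof -
  have l10: "length (fst K10) = 10" and l26: "length (fst K26) = 26" by (simp_all add: K10_def K26_def)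
  have H: "gcp a b \<and> pre (Z-1) a b \<and> 1 \<le> Z \<and> Z \<le> N"
    using kind
  proof (elim disjE exE conjE)
    fix k assume "(a, b) = turyn_iter K10 (replicate k K10)" "Z = 4 * N div 10 + 1"
    then show ?thesis using from_iter[of "replicate k K10" K10 4 a b N 10 Z] pre10 len l10 set_replicate_subset[of k K10 K26] by auto
  next
    fix k assume "(a, b) = turyn_iter K26 (replicate k K26)" "Z = 12 * N div 26 + 1"
    then show ?thesis using from_iter[of "replicate k K26" K26 12 a b N 26 Z] pre26 len l26 set_replicate_subset[of k K26 K10] by (auto simp: insert_commute)
  next
    fix As assume "set As \<subseteq> {K10, K26}" "(a, b) = turyn_iter K26 As" "Z = 12 * N div 26 + 1"
    then show ?thesis using from_iter[of As K26 12 a b N 26 Z] pre26 len l26 by auto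
  qed
  show ?thesis unfolding Let_def
    using final[of a b N Z x0 y1 x1 y0] H len c1 c2 c3 by auto
qed

end
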